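(* Let $\mathcal{A}$ be a primal algebra and let $<$ be a linear order on its universe $A$. Then the class of objects of $\mathbf{OV}_{\mathit{fin}}(\mathcal{A},<)$ has the hereditary property: every substructure of an object of $\mathbf{OV}_{\mathit{fin}}(\mathcal{A},<)$ is itself an object of $\mathbf{OV}_{\mathit{fin}}(\mathcal{A},<)$.
   Context: A primal algebra is a finite algebra with at least two elements in which every finitary operation on its universe is a term operation. For a linear order $<$ on $A$ and a positive integer $n$, the antilexicographic order $\sqsubset$ on $A^n$ is: $(x_1,\dots,x_n)\sqsubset(y_1,\dots,y_n)$ iff there is $s$ with $x_t=y_t$ for all $t>s$ and $x_s<y_s$. For a permutation $\pi$ of $\{1,\dots,n\}$, $\bar x\sqsubset_\pi\bar y$ iff $(x_{\pi(1)},\dots,x_{\pi(n)})\sqsubset(y_{\pi(1)},\dots,y_{\pi(n)})$; $\sqsubseteq_\pi$ is its reflexive version and $\mathcal{A}^n_{\sqsubseteq_\pi}$ is the power algebra $\mathcal{A}^n$ expanded by the relation $\sqsubseteq_\pi$. $\mathbf{OV}_{\mathit{fin}}(\mathcal{A},<)$ is the category whose objects are all structures isomorphic to some $\mathcal{A}^n_{\sqsubseteq_\pi}$ ($n$ a positive integer, $\pi$ a permutation of $\{1,\dots,n\}$) and whose morphisms are embeddings (injective maps preserving the operations and preserving and reflecting the order relation). A substructure is a subset closed under the operations, with the induced operations and order. *)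

theory Defs
  imports Main
begin

text \<open>An algebra is given by a universe A :: 'a set, an arity function
  ar :: 'f => nat on operation symbols, and interpretations
  F :: 'f => 'a list => 'a (F f is applied to argument lists of length ar f).\<close>

definition alg_closed :: "'a set \<Rightarrow> ('f \<Rightarrow> nat) \<Rightarrow> ('f \<Rightarrow> 'a list \<Rightarrow> 'a) \<Rightarrow> bool" where
  "alg_closed A ar F \<longleftrightarrow>
     (\<forall>f xs. length xs = ar f \<and> set xs \<subseteq> A \<longrightarrow> F f xs \<in> A)"

inductive term_op :: "('f \<Rightarrow> nat) \<Rightarrow> ('f \<Rightarrow> 'a list \<Rightarrow> 'a) \<Rightarrow> nat \<Rightarrow> ('a list \<Rightarrow> 'a) \<Rightarrow> bool"
  for ar F n where
  proj: "i < n \<Longrightarrow> term_op ar F n (\<lambda>xs. xs ! i)"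
| comp: "length hs = ar f \<Longrightarrow> (\<forall>h\<in>set hs. term_op ar F n h)
         \<Longrightarrow> term_op ar F n (\<lambda>xs. F f (map (\<lambda>h. h xs) hs))"

definition primal :: "'a set \<Rightarrow> ('f \<Rightarrow> nat) \<Rightarrow> ('f \<Rightarrow> 'a list \<Rightarrow> 'a) \<Rightarrow> bool" where
  "primal A ar F \<longleftrightarrow> finite A \<and> 2 \<le> card A \<and> alg_closed A ar F \<and>
     (\<forall>n \<ge> 1. \<forall>g :: 'a list \<Rightarrow> 'a.
        (\<forall>xs. length xs = n \<and> set xs \<subseteq> A \<longrightarrow> g xs \<in> A) \<longrightarrow>
        (\<exists>t. term_op ar F n t \<and> (\<forall>xs. length xs = n \<and> set xs \<subseteq> A \<longrightarrow> t xs = g xs)))"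

definition lin_order_on :: "'a set \<Rightarrow> ('a \<Rightarrow> 'a \<Rightarrow> bool) \<Rightarrow> bool" where
  "lin_order_on A lt \<longleftrightarrow>
     (\<forall>x\<in>A. \<not> lt x x) \<and>
     (\<forall>x\<in>A. \<forall>y\<in>A. \<forall>z\<in>A. lt x y \<longrightarrow> lt y z \<longrightarrow> lt x z) \<and>
     (\<forall>x\<in>A. \<forall>y\<in>A. x \<noteq> y \<longrightarrow> lt x y \<or> lt y x)"

definition antilex :: "('a \<Rightarrow> 'a \<Rightarrow> bool) \<Rightarrow> nat \<Rightarrow> 'a list \<Rightarrow> 'a list \<Rightarrow> bool" where
  "antilex lt n xs ys \<longleftrightarrow>
     (\<exists>s<n. (\<forall>t. s < t \<and> t < n \<longrightarrow> xs ! t = ys ! t) \<and> lt (xs ! s) (ys ! s))"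

definition permute_tuple :: "nat \<Rightarrow> (nat \<Rightarrow> nat) \<Rightarrow> 'a list \<Rightarrow> 'a list" where
  "permute_tuple n \<pi> xs = map (\<lambda>i. xs ! \<pi> i) [0..<n]"

definition antilex_le_perm :: "('a \<Rightarrow> 'a \<Rightarrow> bool) \<Rightarrow> nat \<Rightarrow> (nat \<Rightarrow> nat) \<Rightarrow> 'a list \<Rightarrow> 'a list \<Rightarrow> bool" where
  "antilex_le_perm lt n \<pi> xs ys \<longleftrightarrow>
     xs = ys \<or> antilex lt n (permute_tuple n \<pi> xs) (permute_tuple n \<pi> ys)"

record ('f, 'b) ostruct =
  univ :: "'b set"
  ops :: "'f \<Rightarrow> 'b list \<Rightarrow> 'b"
  ord :: "'b \<Rightarrow> 'b \<Rightarrow> bool"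

definition pow_struct :: "'a set \<Rightarrow> ('f \<Rightarrow> 'a list \<Rightarrow> 'a) \<Rightarrow> ('a \<Rightarrow> 'a \<Rightarrow> bool)
    \<Rightarrow> nat \<Rightarrow> (nat \<Rightarrow> nat) \<Rightarrow> ('f, 'a list) ostruct" where
  "pow_struct A F lt n \<pi> =
     \<lparr> univ = {xs. length xs = n \<and> set xs \<subseteq> A},
       ops = (\<lambda>f args. map (\<lambda>i. F f (map (\<lambda>x. x ! i) args)) [0..<n]),
       ord = antilex_le_perm lt n \<pi> \<rparr>"

definition struct_closed :: "('f \<Rightarrow> nat) \<Rightarrow> ('f, 'b) ostruct \<Rightarrow> bool" where
  "struct_closed ar S \<longleftrightarrow>
     (\<forall>f args. length args = ar f \<and> set args \<subseteq> univ S \<longrightarrow> ops S f args \<in> univ S)"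

definition struct_iso :: "('f \<Rightarrow> nat) \<Rightarrow> ('f, 'b) ostruct \<Rightarrow> ('f, 'c) ostruct \<Rightarrow> bool" where
  "struct_iso ar S T \<longleftrightarrow> struct_closed ar S \<and> struct_closed ar T \<and>
     (\<exists>h. bij_betw h (univ S) (univ T) \<and>
        (\<forall>f args. length args = ar f \<and> set args \<subseteq> univ S \<longrightarrow>
            h (ops S f args) = ops T f (map h args)) \<and>
        (\<forall>x\<in>univ S. \<forall>y\<in>univ S. ord S x y \<longleftrightarrow> ord T (h x) (h y)))"

definition OV_fin_object :: "'a set \<Rightarrow> ('f \<Rightarrow> nat) \<Rightarrow> ('f \<Rightarrow> 'a list \<Rightarrow> 'a)
    \<Rightarrow> ('a \<Rightarrow> 'a \<Rightarrow> bool) \<Rightarrow> ('f, 'b) ostruct \<Rightarrow> bool" where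
  "OV_fin_object A ar F lt S \<longleftrightarrow>
     (\<exists>n \<ge> 1. \<exists>\<pi>. bij_betw \<pi> {0..<n} {0..<n} \<and> struct_iso ar S (pow_struct A F lt n \<pi>))"

definition sub_universe :: "('f \<Rightarrow> nat) \<Rightarrow> ('f, 'b) ostruct \<Rightarrow> 'b set \<Rightarrow> bool" where
  "sub_universe ar S B \<longleftrightarrow> B \<subseteq> univ S \<and> B \<noteq> {} \<and>
     (\<forall>f args. length args = ar f \<and> set args \<subseteq> B \<longrightarrow> ops S f args \<in> B)"

end

theory Submission
  imports Defs
begin

lemma term_closed:
  fixes F :: "'f \<Rightarrow> 'a list \<Rightarrow> 'a"
  assumes t: "term_op ar F m t"
    and Dn: "\<And>d. d \<in> D \<Longrightarrow> length d = n"
    and cl: "\<And>f args. length args = ar f \<Longrightarrow> set args \<subseteq> D \<Longrightarrow>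
              map (\<lambda>i. F f (map (\<lambda>x. x!i) args)) [0..<n] \<in> D"
    and bs: "length bs = m" "set bs \<subseteq> D"
  shows "map (\<lambda>i. t (map (\<lambda>b. b!i) bs)) [0..<n] \<in> D"
  using t
proof (induction rule: term_op.induct)
  case (proj i)
  have "bs ! i \<in> D" using proj bs by auto
  moreover have "map (\<lambda>j. map (\<lambda>b. b!j) bs ! i) [0..<n] = bs ! i"
    using proj bs Dn[OF \<open>bs ! i \<in> D\<close>] by (auto intro: nth_equalityI)
  ultimately show ?case by simp
next
  case (comp hs f)
  define d where "d = (\<lambda>h::'a list \<Rightarrow> 'a. map (\<lambda>i. h (map (\<lambda>b. b!i) bs)) [0..<n])"
  have "set (map d hs) \<subseteq> D" using comp by (auto simp: d_def)
  hence "map (\<lambda>i. F f (map (\<lambda>x. x!i) (map d hs))) [0..<n] \<in> D"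
    using cl[of "map d hs" f] comp by simp
  moreover have "map (\<lambda>i. F f (map (\<lambda>x. x!i) (map d hs))) [0..<n]
     = map (\<lambda>i. F f (map (\<lambda>h. h (map (\<lambda>b. b!i) bs)) hs)) [0..<n]"
    by (intro map_cong refl arg_cong[where f="F f"]) (auto simp: d_def)
  ultimately show ?case by metis
qed

lemma diag_closed:
  assumes pr: "primal A ar F"
    and DA: "D \<subseteq> {xs. length xs = n \<and> set xs \<subseteq> A}" and Dne: "D \<noteq> {}"
    and cl: "\<And>f args. length args = ar f \<Longrightarrow> set args \<subseteq> D \<Longrightarrow>
              map (\<lambda>i. F f (map (\<lambda>x. x!i) args)) [0..<n] \<in> D"
    and x: "length x = n" "set x \<subseteq> A"
    and resp: "\<And>c c'. c < n \<Longrightarrow> c' < n \<Longrightarrow> (\<forall>b\<in>D. b!c = b!c') \<Longrightarrow> x!c = x!c'"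
  shows "x \<in> D"
proof -
  have finA: "finite A" using pr by (simp add: primal_def)
  have "finite {xs. set xs \<subseteq> A \<and> length xs = n}" using finA by (rule finite_lists_length_eq)
  moreover have "D \<subseteq> {xs. set xs \<subseteq> A \<and> length xs = n}" using DA by auto
  ultimately have "finite D" using finite_subset by blast
  then obtain bs where bs: "set bs = D" using finite_list by blast
  define m where "m = length bs"
  have m1: "m \<ge> 1" using Dne bs m_def by (cases bs) auto
  have Ane: "A \<noteq> {}" using pr by (auto simp: primal_def)
  define col where "col = (\<lambda>i. map (\<lambda>b. b!i) bs)"
  define g where "g = (\<lambda>ys. if (\<exists>c<n. ys = col c) then x ! (SOME c. c<n \<and> ys = col c) else (SOME a. a\<in>A))"
  have gA: "g ys \<in> A" if "length ys = m" "set ys \<subseteq> A" for ys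
  proof (cases "\<exists>c<n. ys = col c")
    case True
    then have "(SOME c. c<n \<and> ys = col c) < n" by (metis (mono_tags, lifting) someI_ex)
    then show ?thesis using True x by (auto simp: g_def)
  next
    case False
    then show ?thesis using Ane by (auto simp: g_def some_in_eq)
  qed
  obtain t where t: "term_op ar F m t" and tg: "\<And>ys. length ys = m \<Longrightarrow> set ys \<subseteq> A \<Longrightarrow> t ys = g ys"
    using pr m1 gA unfolding primal_def by metis
  have "map (\<lambda>i. t (col i)) [0..<n] \<in> D"
    unfolding col_def
    by (rule term_closed[OF t _ cl]) (use DA bs m_def in auto)
  moreover have "map (\<lambda>i. t (col i)) [0..<n] = x"
  proof (rule nth_equalityI)
    fix i assume "i < length (map (\<lambda>i. t (col i)) [0..<n])"
    hence i: "i < n" by simp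
    have colA: "length (col i) = m" "set (col i) \<subseteq> A"
      using DA bs i by (fastforce simp: col_def m_def)+
    have ex: "\<exists>c<n. col i = col c" using i by auto
    define c where "c = (SOME c. c<n \<and> col i = col c)"
    have c: "c < n" "col i = col c" using someI_ex[OF ex[unfolded Bex_def[symmetric]]]
      by (auto simp: c_def)
    have "\<forall>b\<in>D. b!c = b!i"
    proof
      fix b assume "b \<in> D"
      then obtain j where "j < length bs" "bs ! j = b" using bs by (metis in_set_conv_nth)
      then show "b!c = b!i" using c(2) unfolding col_def
        by (metis nth_map)
    qed
    hence "x!c = x!i" using resp c i by blast
    then show "map (\<lambda>i. t (col i)) [0..<n] ! i = x ! i"
      using i tg[OF colA] ex by (simp add: g_def c_def)
  qed (use x in simp)
  ultimately show ?thesis by simp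
qed
locale diag =
  fixes D :: "'a list set" and \<pi> :: "nat \<Rightarrow> nat" and n :: nat and A :: "'a set"
  assumes bij: "bij_betw \<pi> {0..<n} {0..<n}"
    and n1: "n \<ge> 1"
    and DA: "D \<subseteq> {xs. length xs = n \<and> set xs \<subseteq> A}"
    and Dfull: "\<And>x. length x = n \<Longrightarrow> set x \<subseteq> A \<Longrightarrow>
        (\<And>c c'. c < n \<Longrightarrow> c' < n \<Longrightarrow> (\<forall>b\<in>D. b!c = b!c') \<Longrightarrow> x!c = x!c') \<Longrightarrow> x \<in> D"
begin

definition ceq where "ceq c c' \<longleftrightarrow> (\<forall>b\<in>D. b!c = b!c')"
definition P where "P = {p. p<n \<and> (\<forall>p'<n. ceq (\<pi> p') (\<pi> p) \<longrightarrow> p' \<le> p)}"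
definition L where "L = sorted_list_of_set P"
definition k where "k = length L"
definition h where "h x = map (\<lambda>p. x ! \<pi> p) L"

lemma ceq_trans: "ceq a b \<Longrightarrow> ceq b c \<Longrightarrow> ceq a c" and ceq_sym: "ceq a b \<Longrightarrow> ceq b a"
  and ceq_refl: "ceq a a"
  by (auto simp: ceq_def)

lemma finP: "finite P" and Pn: "P \<subseteq> {..<n}"
  by (auto simp: P_def)

lemma setL: "set L = P" and distL: "distinct L"
  using finP by (auto simp: L_def)

lemma pi_lt: "p < n \<Longrightarrow> \<pi> p < n"
  using bij by (auto simp: bij_betw_def)

lemma Lnth: "j < k \<Longrightarrow> L!j \<in> P" "j < k \<Longrightarrow> L!j < n"
  using setL Pn by (auto simp: k_def)

lemma Lmono: "i < k \<Longrightarrow> j < k \<Longrightarrow> L!i < L!j \<longleftrightarrow> i < j"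
proof -
  assume ij: "i < k" "j < k"
  have s: "sorted_wrt (<) L" unfolding L_def by (rule strict_sorted_list_of_set)
  show ?thesis
  proof
    assume "L!i < L!j"
    thus "i < j" using ij s sorted_wrt_nth_less[OF s, of j i] unfolding k_def
      by (metis less_asym linorder_neqE_nat)
  next
    assume "i < j" thus "L!i < L!j" using ij s sorted_wrt_nth_less[OF s] unfolding k_def by blast
  qed
qed

lemma rep_ex: assumes c: "c < n" shows "\<exists>p\<in>P. ceq (\<pi> p) c"
proof -
  define S where "S = {p. p<n \<and> ceq (\<pi> p) c}"
  have finS: "finite S" by (auto simp: S_def)
  obtain q where q: "q < n" "\<pi> q = c" using bij c by (metis atLeastLessThan_iff bij_betw_iff_bijections zero_le)
  have "q \<in> S" using q by (auto simp: S_def ceq_def)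
  hence ne: "S \<noteq> {}" by auto
  define p where "p = Max S"
  have pS: "p \<in> S" using finS ne by (simp add: p_def)
  have "p \<in> P"
    unfolding P_def
  proof (intro CollectI conjI allI impI)
    show "p < n" using pS by (simp add: S_def)
    fix p' assume "p' < n" "ceq (\<pi> p') (\<pi> p)"
    moreover have "ceq (\<pi> p) c" using pS by (simp add: S_def)
    ultimately have "p' \<in> S" using ceq_trans[of "\<pi> p'" "\<pi> p" c] by (simp add: S_def)
    thus "p' \<le> p" using finS by (simp add: p_def)
  qed
  thus ?thesis using pS by (auto simp: S_def)
qed

lemma rep_uniq: "p \<in> P \<Longrightarrow> p' \<in> P \<Longrightarrow> ceq (\<pi> p) (\<pi> p') \<Longrightarrow> p = p'"
proof -
  assume a: "p \<in> P" "p' \<in> P" "ceq (\<pi> p) (\<pi> p')"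
  have "p \<le> p'" using a unfolding P_def by blast
  moreover have "p' \<le> p" using a ceq_sym[OF a(3)] unfolding P_def by blast
  ultimately show ?thesis by simp
qed

lemma rep_max: "p \<in> P \<Longrightarrow> p' < n \<Longrightarrow> ceq (\<pi> p') (\<pi> p) \<Longrightarrow> p' \<le> p"
  unfolding P_def by auto

lemma k1: "k \<ge> 1"
proof -
  obtain p where "p \<in> P" using rep_ex[of 0] n1 by auto
  hence "L \<noteq> []" using setL by auto
  thus ?thesis by (simp add: k_def Suc_le_eq)
qed

lemma P_idx: "p \<in> P \<Longrightarrow> \<exists>j<k. L!j = p"
  using setL by (metis in_set_conv_nth k_def)

lemma h_len: "length (h x) = k" by (simp add: h_def k_def)

lemma h_nth: "j < k \<Longrightarrow> h x ! j = x ! \<pi> (L!j)" by (simp add: h_def k_def)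

lemma h_inj: "inj_on h D"
proof
  fix x y assume xy: "x \<in> D" "y \<in> D" "h x = h y"
  show "x = y"
  proof (rule nth_equalityI)
    show "length x = length y" using xy DA by auto
    fix c assume "c < length x"
    hence c: "c < n" using xy DA by auto
    obtain p where p: "p \<in> P" "ceq (\<pi> p) c" using rep_ex[OF c] by auto
    obtain j where j: "j < k" "L!j = p" using P_idx[OF p(1)] by auto
    have "x ! \<pi> p = y ! \<pi> p" using h_nth[OF j(1), of x] h_nth[OF j(1), of y] xy j by simp
    thus "x ! c = y ! c" using p(2) xy unfolding ceq_def by metis
  qed
qed

lemma h_img: "x \<in> D \<Longrightarrow> h x \<in> {z. length z = k \<and> set z \<subseteq> A}"
proof -
  assume x: "x \<in> D"
  have "x ! \<pi> p \<in> A" if "p \<in> set L" for p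
  proof -
    have "\<pi> p < n" using that setL Pn pi_lt by auto
    moreover have "length x = n" "set x \<subseteq> A" using x DA by auto
    ultimately show ?thesis by (metis nth_mem subsetD)
  qed
  thus ?thesis by (auto simp: h_len h_def k_def)
qed

lemma h_surj: assumes z: "length z = k" "set z \<subseteq> A" shows "z \<in> h ` D"
proof -
  define J where "J = (\<lambda>c. SOME j. j < k \<and> ceq (\<pi> (L!j)) c)"
  have J: "J c < k \<and> ceq (\<pi> (L!(J c))) c" if cn: "c < n" for c
  proof -
    obtain p where p: "p \<in> P" "ceq (\<pi> p) c" using rep_ex[OF cn] by auto
    obtain j where j: "j < k" "L!j = p" using P_idx[OF p(1)] by auto
    show ?thesis unfolding J_def by (rule someI[of _ j]) (use j p in auto)
  qed
  define x where "x = map (\<lambda>c. z ! J c) [0..<n]"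
  have "x \<in> D"
  proof (rule Dfull)
    show "length x = n" by (simp add: x_def)
    show "set x \<subseteq> A" using J z by (auto simp: x_def)
    fix c c' assume cc: "c < n" "c' < n" "\<forall>b\<in>D. b!c = b!c'"
    hence "ceq c c'" by (simp add: ceq_def)
    hence "(\<lambda>j. j < k \<and> ceq (\<pi> (L!j)) c) = (\<lambda>j. j < k \<and> ceq (\<pi> (L!j)) c')"
      using ceq_trans ceq_sym by blast
    hence "J c = J c'" by (simp add: J_def)
    thus "x!c = x!c'" using cc by (simp add: x_def)
  qed
  moreover have "h x = z"
  proof (rule nth_equalityI)
    show "length (h x) = length z" using z h_len by simp
    fix j assume "j < length (h x)"
    hence j: "j < k" by (simp add: h_len)
    have pn: "\<pi> (L!j) < n" using Lnth[OF j] pi_lt by simp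
    have "J (\<pi> (L!j)) = j"
    proof -
      have a: "J (\<pi> (L!j)) < k" "ceq (\<pi> (L!(J (\<pi> (L!j))))) (\<pi> (L!j))" using J[OF pn] by auto
      hence "L!(J (\<pi> (L!j))) = L!j" using rep_uniq Lnth j by blast
      thus ?thesis using distL a(1) j by (simp add: k_def nth_eq_iff_index_eq)
    qed
    thus "h x ! j = z ! j" using pn by (simp add: x_def h_nth[OF j])
  qed
  ultimately show ?thesis by blast
qed

lemma h_bij: "bij_betw h D {z. length z = k \<and> set z \<subseteq> A}"
  unfolding bij_betw_def using h_inj h_img h_surj by blast

lemma h_ops: assumes "\<forall>a\<in>set args. length a = n"
  shows "h (map (\<lambda>i. G (map (\<lambda>x. x!i) args)) [0..<n]) = map (\<lambda>i. G (map (\<lambda>x. x!i) (map h args))) [0..<k]"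
proof (rule nth_equalityI)
  show "length (h (map (\<lambda>i. G (map (\<lambda>x. x!i) args)) [0..<n])) = length (map (\<lambda>i. G (map (\<lambda>x. x!i) (map h args))) [0..<k])"
    by (simp add: h_len)
  fix j assume "j < length (h (map (\<lambda>i. G (map (\<lambda>x. x!i) args)) [0..<n]))"
  hence j: "j < k" by (simp add: h_len)
  have pn: "\<pi> (L!j) < n" using Lnth[OF j] pi_lt by simp
  have eq: "map (\<lambda>x. x ! \<pi> (L!j)) args = map (\<lambda>x. x!j) (map h args)"
    by (simp add: h_nth[OF j])
  have "h (map (\<lambda>i. G (map (\<lambda>x. x!i) args)) [0..<n]) ! j = G (map (\<lambda>x. x ! \<pi> (L!j)) args)"
    using pn by (simp add: h_nth[OF j])
  also have "\<dots> = G (map (\<lambda>x. x!j) (map h args))" using eq by (rule arg_cong)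
  also have "\<dots> = map (\<lambda>i. G (map (\<lambda>x. x!i) (map h args))) [0..<k] ! j" using j by simp
  finally show "h (map (\<lambda>i. G (map (\<lambda>x. x!i) args)) [0..<n]) ! j = map (\<lambda>i. G (map (\<lambda>x. x!i) (map h args))) [0..<k] ! j" .
qed


lemma perm_nth: "p < n \<Longrightarrow> permute_tuple n \<pi> x ! p = x ! \<pi> p"
  by (simp add: permute_tuple_def)

lemma h_ord: assumes irr: "\<forall>a\<in>A. \<not> lt a a" and x: "x \<in> D" and y: "y \<in> D"
  shows "antilex lt n (permute_tuple n \<pi> x) (permute_tuple n \<pi> y) \<longleftrightarrow> antilex lt k (h x) (h y)"
proof
  have xA: "length x = n" "set x \<subseteq> A" using x DA by auto
  assume "antilex lt n (permute_tuple n \<pi> x) (permute_tuple n \<pi> y)"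
  then obtain s where s: "s < n" and ag: "\<And>t. s < t \<Longrightarrow> t < n \<Longrightarrow> x ! \<pi> t = y ! \<pi> t"
    and l: "lt (x ! \<pi> s) (y ! \<pi> s)"
    unfolding antilex_def by (auto simp: perm_nth)
  obtain p where p: "p \<in> P" "ceq (\<pi> p) (\<pi> s)" using rep_ex[OF pi_lt[OF s]] by auto
  have "s \<le> p" using rep_max[OF p(1) s ceq_sym[OF p(2)]] .
  moreover have "\<not> s < p"
  proof
    assume sp: "s < p"
    have "p < n" using p Pn by auto
    hence "x ! \<pi> p = y ! \<pi> p" using ag sp by blast
    moreover have "x ! \<pi> s = x ! \<pi> p" "y ! \<pi> s = y ! \<pi> p" using p(2) x y by (auto simp: ceq_def)
    ultimately have "lt (x ! \<pi> s) (x ! \<pi> s)" using l by simp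
    moreover have "x ! \<pi> s \<in> A" using xA pi_lt[OF s] by (metis nth_mem subsetD)
    ultimately show False using irr by blast
  qed
  ultimately have ps: "p = s" by simp
  obtain j where j: "j < k" "L!j = s" using P_idx[OF p(1)] ps by auto
  show "antilex lt k (h x) (h y)"
    unfolding antilex_def
  proof (intro exI conjI allI impI)
    show "j < k" by fact
    fix j' assume "j < j' \<and> j' < k"
    hence "s < L!j'" "L!j' < n" "j' < k" using Lmono[of j j'] j Lnth by auto
    thus "h x ! j' = h y ! j'" using ag by (simp add: h_nth)
  next
    show "lt (h x ! j) (h y ! j)" using l j by (simp add: h_nth)
  qed
next
  assume "antilex lt k (h x) (h y)"
  then obtain j where j: "j < k" and ag: "\<And>j'. j < j' \<Longrightarrow> j' < k \<Longrightarrow> h x ! j' = h y ! j'"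
    and l: "lt (h x ! j) (h y ! j)"
    unfolding antilex_def by auto
  show "antilex lt n (permute_tuple n \<pi> x) (permute_tuple n \<pi> y)"
    unfolding antilex_def
  proof (intro exI conjI allI impI)
    show "L!j < n" using Lnth(2)[OF j] .
    fix t assume t: "L!j < t \<and> t < n"
    obtain p where p: "p \<in> P" "ceq (\<pi> p) (\<pi> t)" using rep_ex[OF pi_lt] t by blast
    have "t \<le> p" using rep_max[OF p(1) _ ceq_sym[OF p(2)]] t by auto
    obtain j' where j': "j' < k" "L!j' = p" using P_idx[OF p(1)] by auto
    have "j < j'" using Lmono[OF j j'(1)] j' t \<open>t \<le> p\<close> by auto
    hence "x ! \<pi> p = y ! \<pi> p" using ag[OF _ j'(1)] j' by (simp add: h_nth)
    moreover have "x ! \<pi> t = x ! \<pi> p" "y ! \<pi> t = y ! \<pi> p" using p(2) x y by (auto simp: ceq_def)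
    ultimately show "permute_tuple n \<pi> x ! t = permute_tuple n \<pi> y ! t" using t by (simp add: perm_nth)
  next
    show "lt (permute_tuple n \<pi> x ! (L!j)) (permute_tuple n \<pi> y ! (L!j))"
      using l j Lnth[OF j] by (simp add: perm_nth h_nth)
  qed
qed

end

theorem lemma5p3:
  fixes A :: "'a set" and ar :: "'f \<Rightarrow> nat" and F :: "'f \<Rightarrow> 'a list \<Rightarrow> 'a"
    and lt :: "'a \<Rightarrow> 'a \<Rightarrow> bool" and S :: "('f, 'b) ostruct" and B :: "'b set"
  assumes "primal A ar F"
    and "lin_order_on A lt"
    and "OV_fin_object A ar F lt S"
    and "sub_universe ar S B"
  shows "OV_fin_object A ar F lt (S\<lparr>univ := B\<rparr>)"
proof -
  note pr = assms(1)
  have irr: "\<forall>a\<in>A. \<not> lt a a" using assms(2) by (simp add: lin_order_on_def)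
  obtain n \<pi> where n1: "n \<ge> 1" and bij: "bij_betw \<pi> {0..<n} {0..<n}"
    and iso: "struct_iso ar S (pow_struct A F lt n \<pi>)"
    using assms(3) unfolding OV_fin_object_def by blast
  obtain \<phi> where phib: "bij_betw \<phi> (univ S) {xs. length xs = n \<and> set xs \<subseteq> A}"
    and phiops: "\<And>f args. length args = ar f \<Longrightarrow> set args \<subseteq> univ S \<Longrightarrow>
         \<phi> (ops S f args) = map (\<lambda>i. F f (map (\<lambda>x. x!i) (map \<phi> args))) [0..<n]"
    and phiord: "\<And>x y. x \<in> univ S \<Longrightarrow> y \<in> univ S \<Longrightarrow>
         ord S x y \<longleftrightarrow> antilex_le_perm lt n \<pi> (\<phi> x) (\<phi> y)"
  proof -
    from iso obtain \<phi> where b: "bij_betw \<phi> (univ S) (univ (pow_struct A F lt n \<pi>))"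
      and o: "\<forall>f args. length args = ar f \<and> set args \<subseteq> univ S \<longrightarrow>
            \<phi> (ops S f args) = ops (pow_struct A F lt n \<pi>) f (map \<phi> args)"
      and r: "\<forall>x\<in>univ S. \<forall>y\<in>univ S. ord S x y \<longleftrightarrow> ord (pow_struct A F lt n \<pi>) (\<phi> x) (\<phi> y)"
      unfolding struct_iso_def by blast
    show ?thesis
      by (rule that[of \<phi>]) (use b o r in \<open>simp_all add: pow_struct_def\<close>)
  qed
  have BS: "B \<subseteq> univ S" and Bne: "B \<noteq> {}"
    and Bcl: "\<And>f args. length args = ar f \<Longrightarrow> set args \<subseteq> B \<Longrightarrow> ops S f args \<in> B"
    using assms(4) unfolding sub_universe_def by auto
  define D where "D = \<phi> ` B"
  have DA: "D \<subseteq> {xs. length xs = n \<and> set xs \<subseteq> A}"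
    using phib BS unfolding D_def bij_betw_def by auto
  have Dne: "D \<noteq> {}" using Bne by (simp add: D_def)
  have cl: "map (\<lambda>i. F f (map (\<lambda>x. x!i) args)) [0..<n] \<in> D"
    if a: "length args = ar f" "set args \<subseteq> D" for f args
  proof -
    define args' where "args' = map (inv_into B \<phi>) args"
    have s': "set args' \<subseteq> B" using a(2) by (auto simp: args'_def D_def inv_into_into)
    have m: "map \<phi> args' = args" using a(2)
      by (auto simp: args'_def D_def f_inv_into_f intro!: map_idI)
    have l': "length args' = ar f" using a(1) by (simp add: args'_def)
    have "\<phi> (ops S f args') \<in> D" using Bcl[OF l' s'] by (simp add: D_def)
    moreover have "set args' \<subseteq> univ S" using s' BS by blast
    note phiops[OF l' this]
    hence "\<phi> (ops S f args') = map (\<lambda>i. F f (map (\<lambda>x. x!i) args)) [0..<n]"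
      by (simp only: m)
    ultimately show ?thesis by simp
  qed
  have Dfull: "x \<in> D" if "length x = n" "set x \<subseteq> A"
      "\<And>c c'. c < n \<Longrightarrow> c' < n \<Longrightarrow> (\<forall>b\<in>D. b!c = b!c') \<Longrightarrow> x!c = x!c'" for x
    by (rule diag_closed[OF pr DA Dne cl that]) auto
  interpret diag D \<pi> n A
    by (rule diag.intro[OF bij n1 DA Dfull])
  have phiBD: "bij_betw \<phi> B D"
    using phib BS unfolding D_def bij_betw_def by (auto intro: inj_on_subset)
  have gb: "bij_betw (h \<circ> \<phi>) B {z. length z = k \<and> set z \<subseteq> A}"
    using bij_betw_trans[OF phiBD h_bij] .
  show ?thesis
    unfolding OV_fin_object_def
  proof (intro exI conjI)
    show "1 \<le> k" by (rule k1)
    show "bij_betw id {0..<k} {0..<k}" by simp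
    show "struct_iso ar (S\<lparr>univ := B\<rparr>) (pow_struct A F lt k id)"
      unfolding struct_iso_def
    proof (intro conjI exI)
      show "struct_closed ar (S\<lparr>univ := B\<rparr>)" using Bcl by (simp add: struct_closed_def)
      show "struct_closed ar (pow_struct A F lt k id)"
        unfolding struct_closed_def
      proof (intro allI impI)
        fix f args assume a: "length args = ar f \<and> set args \<subseteq> univ (pow_struct A F lt k id)"
        have ac: "alg_closed A ar F" using pr by (simp add: primal_def)
        have "F f (map (\<lambda>x. x!i) args) \<in> A" if i: "i < k" for i
        proof -
          have "set (map (\<lambda>x. x!i) args) \<subseteq> A"
          proof
            fix a assume "a \<in> set (map (\<lambda>x. x!i) args)"
            then obtain x where x: "x \<in> set args" "a = x!i" by auto
            hence "length x = k" "set x \<subseteq> A" using a by (auto simp: pow_struct_def)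
            thus "a \<in> A" using x i by (metis nth_mem subsetD)
          qed
          thus ?thesis using ac a unfolding alg_closed_def by simp
        qed
        thus "ops (pow_struct A F lt k id) f args \<in> univ (pow_struct A F lt k id)"
          by (auto simp: pow_struct_def)
      qed
      show "bij_betw (h \<circ> \<phi>) (univ (S\<lparr>univ := B\<rparr>)) (univ (pow_struct A F lt k id))"
        using gb by (simp add: pow_struct_def)
      show "\<forall>f args. length args = ar f \<and> set args \<subseteq> univ (S\<lparr>univ := B\<rparr>) \<longrightarrow>
          (h \<circ> \<phi>) (ops (S\<lparr>univ := B\<rparr>) f args) = ops (pow_struct A F lt k id) f (map (h \<circ> \<phi>) args)"
      proof (intro allI impI)
        fix f args assume a: "length args = ar f \<and> set args \<subseteq> univ (S\<lparr>univ := B\<rparr>)"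
        hence a': "length args = ar f" "set args \<subseteq> univ S" using BS by auto
        have len: "\<forall>a\<in>set (map \<phi> args). length a = n" using a' phib unfolding bij_betw_def by auto
        have "(h \<circ> \<phi>) (ops S f args) = h (map (\<lambda>i. F f (map (\<lambda>x. x!i) (map \<phi> args))) [0..<n])"
          using phiops[OF a'] by simp
        also have "\<dots> = map (\<lambda>i. F f (map (\<lambda>x. x!i) (map h (map \<phi> args)))) [0..<k]"
          by (rule h_ops[OF len])
        finally show "(h \<circ> \<phi>) (ops (S\<lparr>univ := B\<rparr>) f args) = ops (pow_struct A F lt k id) f (map (h \<circ> \<phi>) args)"
          by (simp add: pow_struct_def)
      qed
      show "\<forall>x\<in>univ (S\<lparr>univ := B\<rparr>). \<forall>y\<in>univ (S\<lparr>univ := B\<rparr>).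
          ord (S\<lparr>univ := B\<rparr>) x y = ord (pow_struct A F lt k id) ((h \<circ> \<phi>) x) ((h \<circ> \<phi>) y)"
      proof (intro ballI)
        fix x y assume "x \<in> univ (S\<lparr>univ := B\<rparr>)" "y \<in> univ (S\<lparr>univ := B\<rparr>)"
        hence xy: "x \<in> B" "y \<in> B" by auto
        hence xyD: "\<phi> x \<in> D" "\<phi> y \<in> D" by (auto simp: D_def)
        have pid: "permute_tuple k id z = z" if "length z = k" for z :: "'a list"
          using that by (auto simp: permute_tuple_def intro: nth_equalityI)
        have eqiff: "\<phi> x = \<phi> y \<longleftrightarrow> h (\<phi> x) = h (\<phi> y)"
          using xyD by (simp add: inj_on_eq_iff[OF h_inj])
        have "ord S x y \<longleftrightarrow> antilex_le_perm lt n \<pi> (\<phi> x) (\<phi> y)"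
          using phiord xy BS by auto
        also have "\<dots> \<longleftrightarrow> h (\<phi> x) = h (\<phi> y) \<or> antilex lt k (h (\<phi> x)) (h (\<phi> y))"
          unfolding antilex_le_perm_def using eqiff h_ord[of lt, OF irr xyD] by simp
        also have "\<dots> \<longleftrightarrow> antilex_le_perm lt k id (h (\<phi> x)) (h (\<phi> y))"
          unfolding antilex_le_perm_def by (simp add: pid h_len)
        finally show "ord (S\<lparr>univ := B\<rparr>) x y = ord (pow_struct A F lt k id) ((h \<circ> \<phi>) x) ((h \<circ> \<phi>) y)"
          by (simp add: pow_struct_def)
      qed
    qed
  qed
qed

end
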